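(* There is a universal constant $c>0$ such that the following holds. Let $n\geq 1$, let $G_1,\ldots,G_n$ be independent standard real Gaussian random variables (mean $0$, variance $1$), and let $\lambda_1,\ldots,\lambda_n \in (0,1]$. Define \[ t := \sum_{i=1}^n \lambda_i,\qquad f := \sqrt{\sum_{i=1}^n \lambda_i^2},\qquad X := \sum_{i=1}^n \lambda_i G_i^2 . \] If $t \leq 1$, then $\Pr[X > t+f] > c$ and $\Pr[X < t] > c$.
   Context: The constant $c$ is independent of $n$ and of $\lambda_1,\ldots,\lambda_n$. *)

theory Defs
  imports "HOL-Probability.Probability"
begin

definition std_gaussian :: "real measure" where
  "std_gaussian = density lborel std_normal_density"

text \<open>Joint law of n independent standard Gaussians G_0, ..., G_(n-1):
  the product measure on {..<n}, the coordinate projections being the G_i.\<close>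
definition gauss_space :: "nat \<Rightarrow> (nat \<Rightarrow> real) measure" where
  "gauss_space n = PiM {..<n} (\<lambda>_. std_gaussian)"

end

theory Submission
  imports Defs
begin



lemma sg_prob: "prob_space std_gaussian"
  unfolding std_gaussian_def by (rule prob_space_normal_density) simp

lemma sets_sg[measurable_cong, simp]: "sets std_gaussian = sets borel"
  unfolding std_gaussian_def by simp

lemma space_sg[simp]: "space std_gaussian = UNIV"
  unfolding std_gaussian_def by simp

lemma sg_moment_even: "has_bochner_integral std_gaussian (\<lambda>x. x ^ (2*k)) (fact (2 * k) / (2^k * fact k))"
  unfolding std_gaussian_def
  apply (rule has_bochner_integral_density)
     apply simp
    apply simp
   apply (simp add: normal_density_nonneg)
  using std_normal_moment_even[of k] by simp

lemma sg_poly: "has_bochner_integral std_gaussian (\<lambda>x. (x\<^sup>2 - 1) ^ k)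
   (\<Sum>j\<le>k. of_nat (k choose j) * (fact (2 * j) / (2^j * fact j)) * (-1)^(k-j))"
proof -
  have e: "(x\<^sup>2 - 1) ^ k = (\<Sum>j\<le>k. of_nat (k choose j) * x^(2*j) * (-1)^(k-j))" for x :: real
  proof -
    have "(x\<^sup>2 - 1) ^ k = (x\<^sup>2 + (-1)) ^ k" by simp
    also have "\<dots> = (\<Sum>j\<le>k. of_nat (k choose j) * (x\<^sup>2)^j * (-1)^(k-j))" by (rule binomial_ring)
    finally show ?thesis by (simp only: power_mult)
  qed
  show ?thesis unfolding e
    apply (rule has_bochner_integral_sum)
    apply (rule has_bochner_integral_mult_left)
    apply (rule has_bochner_integral_mult_right)
    apply (rule sg_moment_even)
    done
qed

lemma sg_m2: "has_bochner_integral std_gaussian (\<lambda>x. (x\<^sup>2 - 1) ^ 2) 2"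
proof -
  have "(\<Sum>j\<le>2. of_nat (2 choose j) * (fact (2 * j) / (2^j * fact j)) * (-1::real)^(2-j)) = 2"
    by (simp add: numeral_2_eq_2 fact_numeral)
  then show ?thesis using sg_poly[of 2] by simp
qed

lemma sg_m1: "has_bochner_integral std_gaussian (\<lambda>x. (x\<^sup>2 - 1) ^ 1) 0"
proof -
  have "(\<Sum>j\<le>1. of_nat (1 choose j) * (fact (2 * j) / (2^j * fact j)) * (-1::real)^(1-j)) = 0"
    by (simp add: eval_nat_numeral sum.atMost_Suc)
  then show ?thesis using sg_poly[of 1] by simp
qed

lemma sg_m3: "has_bochner_integral std_gaussian (\<lambda>x. (x\<^sup>2 - 1) ^ 3) 8"
proof -
  have "(\<Sum>j\<le>3. of_nat (3 choose j) * (fact (2 * j) / (2^j * fact j)) * (-1::real)^(3-j)) = 8"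
    by (simp add: eval_nat_numeral sum.atMost_Suc)
  then show ?thesis using sg_poly[of 3] by simp
qed

lemma sg_m4: "has_bochner_integral std_gaussian (\<lambda>x. (x\<^sup>2 - 1) ^ 4) 60"
proof -
  have "(\<Sum>j\<le>4. of_nat (4 choose j) * (fact (2 * j) / (2^j * fact j)) * (-1::real)^(4-j)) = 60"
    by (simp add: eval_nat_numeral sum.atMost_Suc)
  then show ?thesis using sg_poly[of 4] by simp
qed


lemma sg_m6: "has_bochner_integral std_gaussian (\<lambda>x. (x\<^sup>2 - 1) ^ 6) 6040"
proof -
  have "(\<Sum>j\<le>6. of_nat (6 choose j) * (fact (2 * j) / (2^j * fact j)) * (-1::real)^(6-j)) = 6040"
    by (simp add: eval_nat_numeral sum.atMost_Suc)
  then show ?thesis using sg_poly[of 6] by simp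
qed

lemma gs_prob: "prob_space (gauss_space n)"
  unfolding gauss_space_def by (intro prob_space_PiM sg_prob)

lemma gs_comp_meas[measurable]: "(\<lambda>G. G i) \<in> borel_measurable (gauss_space n)"
proof (cases "i < n")
  case True
  have "(\<lambda>G. G i) \<in> measurable (gauss_space n) std_gaussian"
    unfolding gauss_space_def using True by (intro measurable_component_singleton) auto
  moreover have "measurable (gauss_space n) std_gaussian = measurable (gauss_space n) borel"
    by (rule measurable_cong_sets) (rule refl, rule sets_sg)
  ultimately show ?thesis by (simp only:)
next
  case False
  have u: "G i = undefined" if "G \<in> space (gauss_space n)" for G
  proof -
    have "G \<in> (\<Pi>\<^sub>E j\<in>{..<n}. space std_gaussian)" using that by (simp add: gauss_space_def space_PiM)
    then show ?thesis using False by (metis PiE_arb lessThan_iff)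
  qed
  have "(\<lambda>G. undefined::real) \<in> borel_measurable (gauss_space n)" by simp
  then show ?thesis by (subst measurable_cong[where g="\<lambda>G. undefined"]) (use u in auto)
qed

lemma gs_distr: "i < n \<Longrightarrow> distr (gauss_space n) std_gaussian (\<lambda>G. G i) = std_gaussian"
  unfolding gauss_space_def by (rule distr_PiM_component) (auto intro: sg_prob)

lemma gs_coord:
  fixes h :: "real \<Rightarrow> real"
  assumes i: "i < n" and h: "has_bochner_integral std_gaussian h v"
  shows "has_bochner_integral (gauss_space n) (\<lambda>G. h (G i)) v"
proof -
  have hm: "h \<in> borel_measurable std_gaussian" using h by (rule borel_measurable_has_bochner_integral)
  have T: "(\<lambda>G. G i) \<in> measurable (gauss_space n) std_gaussian"
    unfolding gauss_space_def using i by (intro measurable_component_singleton) auto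
  have "has_bochner_integral (distr (gauss_space n) std_gaussian (\<lambda>G. G i)) h v"
    using h gs_distr[OF i] by simp
  then show ?thesis
    using T hm by (simp add: has_bochner_integral_iff integrable_distr_eq[OF T hm] integral_distr[OF T hm])
qed


lemma gs_indep:
  assumes "n \<ge> 1"
  shows "prob_space.indep_vars (gauss_space n) (\<lambda>_. borel) (\<lambda>i G. G i) {..<n}"
proof -
  interpret prob_space "gauss_space n" by (rule gs_prob)
  have ne: "{..<n} \<noteq> {}" using assms by (simp add: lessThan_empty_iff)
  have "distr (gauss_space n) (\<Pi>\<^sub>M i\<in>{..<n}. borel) (\<lambda>x. \<lambda>i\<in>{..<n}. x i)
      = (\<Pi>\<^sub>M i\<in>{..<n}. distr (gauss_space n) borel (\<lambda>G. G i))"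
  proof -
    have sp: "x = (\<lambda>i\<in>{..<n}. x i)" if "x \<in> space (gauss_space n)" for x
    proof -
      have "x \<in> (\<Pi>\<^sub>E j\<in>{..<n}. space std_gaussian)" using that by (simp add: gauss_space_def space_PiM)
      then show ?thesis by (simp add: PiE_restrict)
    qed
    have ss: "sets (gauss_space n) = sets (\<Pi>\<^sub>M i\<in>{..<n}. borel)"
      unfolding gauss_space_def by (rule sets_PiM_cong) auto
    have "distr (gauss_space n) (\<Pi>\<^sub>M i\<in>{..<n}. borel) (\<lambda>x. \<lambda>i\<in>{..<n}. x i)
        = distr (gauss_space n) (gauss_space n) (\<lambda>x. x)"
      by (rule distr_cong) (simp, simp add: ss, use sp in auto)
    also have "\<dots> = gauss_space n" by simp
    also have "\<dots> = (\<Pi>\<^sub>M i\<in>{..<n}. distr (gauss_space n) borel (\<lambda>G. G i))"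
    proof -
      have "gauss_space n = (\<Pi>\<^sub>M i\<in>{..<n}. std_gaussian)" by (simp add: gauss_space_def)
      also have "\<dots> = (\<Pi>\<^sub>M i\<in>{..<n}. distr (gauss_space n) borel (\<lambda>G. G i))"
      proof (rule PiM_cong)
        fix i assume "i \<in> {..<n}"
        then have "std_gaussian = distr (gauss_space n) std_gaussian (\<lambda>G. G i)" using gs_distr by simp
        also have "\<dots> = distr (gauss_space n) borel (\<lambda>G. G i)"
          by (rule distr_cong) auto
        finally show "std_gaussian = distr (gauss_space n) borel (\<lambda>G. G i)" .
      qed simp
      finally show ?thesis .
    qed
    finally show ?thesis .
  qed
  then show ?thesis
    by (subst indep_vars_iff_distr_eq_PiM[OF ne]) auto
qed

lemma (in prob_space) mom_add:
  fixes A B :: "'a \<Rightarrow> real"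
  assumes ind: "indep_var borel A borel B"
    and iA: "\<And>j. j \<le> k \<Longrightarrow> integrable M (\<lambda>\<omega>. A \<omega> ^ j)"
    and iB: "\<And>j. j \<le> k \<Longrightarrow> integrable M (\<lambda>\<omega>. B \<omega> ^ j)"
  shows "integrable M (\<lambda>\<omega>. (A \<omega> + B \<omega>) ^ k) \<and>
    integral\<^sup>L M (\<lambda>\<omega>. (A \<omega> + B \<omega>) ^ k) =
      (\<Sum>j\<le>k. of_nat (k choose j) * (integral\<^sup>L M (\<lambda>\<omega>. A \<omega> ^ j) * integral\<^sup>L M (\<lambda>\<omega>. B \<omega> ^ (k - j))))"
proof -
  have ind': "indep_var borel (\<lambda>\<omega>. A \<omega> ^ j) borel (\<lambda>\<omega>. B \<omega> ^ (k - j))" for j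
  proof -
    have "indep_var borel ((\<lambda>x. x ^ j) \<circ> A) borel ((\<lambda>x. x ^ (k - j)) \<circ> B)"
      by (rule indep_var_compose[OF ind]) auto
    then show ?thesis by (simp add: comp_def)
  qed
  have e: "(\<lambda>\<omega>. (A \<omega> + B \<omega>) ^ k) = (\<lambda>\<omega>. \<Sum>j\<le>k. of_nat (k choose j) * (A \<omega> ^ j * B \<omega> ^ (k - j)))"
    by (rule ext) (simp only: binomial_ring mult.assoc)
  have ip: "integrable M (\<lambda>\<omega>. A \<omega> ^ j * B \<omega> ^ (k - j))" if "j \<le> k" for j
    using indep_var_integrable[OF ind' iA iB] that by simp
  have ep: "integral\<^sup>L M (\<lambda>\<omega>. A \<omega> ^ j * B \<omega> ^ (k - j)) = integral\<^sup>L M (\<lambda>\<omega>. A \<omega> ^ j) * integral\<^sup>L M (\<lambda>\<omega>. B \<omega> ^ (k - j))" if "j \<le> k" for j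
    using indep_var_lebesgue_integral[OF ind' iA iB] that by simp
  have ii: "integrable M (\<lambda>\<omega>. \<Sum>j\<le>k. of_nat (k choose j) * (A \<omega> ^ j * B \<omega> ^ (k - j)))"
    by (rule Bochner_Integration.integrable_sum, rule integrable_mult_right) (simp add: ip)
  have "integral\<^sup>L M (\<lambda>\<omega>. \<Sum>j\<le>k. of_nat (k choose j) * (A \<omega> ^ j * B \<omega> ^ (k - j)))
     = (\<Sum>j\<le>k. integral\<^sup>L M (\<lambda>\<omega>. of_nat (k choose j) * (A \<omega> ^ j * B \<omega> ^ (k - j))))"
    by (rule Bochner_Integration.integral_sum, rule integrable_mult_right) (simp add: ip)
  also have "\<dots> = (\<Sum>j\<le>k. of_nat (k choose j) * (integral\<^sup>L M (\<lambda>\<omega>. A \<omega> ^ j) * integral\<^sup>L M (\<lambda>\<omega>. B \<omega> ^ (k - j))))"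
    by (rule sum.cong) (simp_all add: ep)
  finally show ?thesis unfolding e using ii by simp
qed

definition Sm :: "(nat \<Rightarrow> real) \<Rightarrow> nat \<Rightarrow> (nat \<Rightarrow> real) \<Rightarrow> real" where
  "Sm lam m G = (\<Sum>i<m. lam i * ((G i)\<^sup>2 - 1))"

lemma Y_mom:
  assumes i: "i < n" and h: "has_bochner_integral std_gaussian (\<lambda>x. (x\<^sup>2 - 1) ^ k) c"
  shows "has_bochner_integral (gauss_space n) (\<lambda>G. (lam i * ((G i)\<^sup>2 - 1)) ^ k) (lam i ^ k * c)"
proof -
  have "has_bochner_integral std_gaussian (\<lambda>x. lam i ^ k * (x\<^sup>2 - 1) ^ k) (lam i ^ k * c)"
    by (rule has_bochner_integral_mult_right[OF h])
  then have "has_bochner_integral std_gaussian (\<lambda>x. (lam i * (x\<^sup>2 - 1)) ^ k) (lam i ^ k * c)"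
    by (simp add: power_mult_distrib)
  from gs_coord[OF i this] show ?thesis .
qed

lemma Y_indep:
  assumes n: "n \<ge> 1" and m: "m < n"
  shows "prob_space.indep_var (gauss_space n) borel (\<lambda>G. lam m * ((G m)\<^sup>2 - 1)) borel (Sm lam m)"
proof -
  interpret prob_space "gauss_space n" by (rule gs_prob)
  have "indep_vars (\<lambda>_. borel) (\<lambda>i G. lam i * ((G i)\<^sup>2 - 1)) {..<n}"
    by (rule indep_vars_compose2[OF gs_indep[OF n], where Y="\<lambda>i x. lam i * (x\<^sup>2 - 1)"]) auto
  then have "indep_vars (\<lambda>_. borel) (\<lambda>i G. lam i * ((G i)\<^sup>2 - 1)) (insert m {..<m})"
    by (rule indep_vars_subset) (use m in auto)
  from indep_vars_sum[OF _ _ this] show ?thesis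
    unfolding Sm_def[abs_def] by simp
qed

lemma sum4_le: assumes "\<forall>i<m. 0 \<le> (lam::nat\<Rightarrow>real) i"
  shows "(\<Sum>i<m. lam i ^ 4) \<le> (\<Sum>i<m. lam i ^ 2)^2"
proof -
  have "(\<Sum>i<m. lam i ^ 4) \<le> (\<Sum>i<m. lam i ^ 2 * (\<Sum>j<m. lam j ^ 2))"
  proof (rule sum_mono)
    fix i assume "i \<in> {..<m}"
    then have "lam i ^ 2 \<le> (\<Sum>j<m. lam j ^ 2)" by (intro member_le_sum) auto
    then have "lam i ^ 2 * lam i ^ 2 \<le> lam i ^ 2 * (\<Sum>j<m. lam j ^ 2)" by (intro mult_left_mono) auto
    then show "lam i ^ 4 \<le> lam i ^ 2 * (\<Sum>j<m. lam j ^ 2)" by (simp add: power2_eq_square power4_eq_xxxx mult.assoc)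
  qed
  also have "\<dots> = (\<Sum>i<m. lam i ^ 2)^2" by (simp add: sum_distrib_right power2_eq_square)
  finally show ?thesis .
qed

lemma s3_le: assumes "\<forall>i<m. 0 \<le> (lam::nat\<Rightarrow>real) i"
  shows "l ^ 3 * (\<Sum>i<m. lam i ^ 3) \<le> (l^2 * (\<Sum>i<m. lam i ^ 2)^2 + l^4 * (\<Sum>i<m. lam i ^ 2)) / 2"
proof -
  have "l ^ 3 * (\<Sum>i<m. lam i ^ 3) = (\<Sum>i<m. l^3 * lam i ^ 3)" by (simp add: sum_distrib_left)
  also have "\<dots> \<le> (\<Sum>i<m. (l^2 * lam i ^ 4 + l^4 * lam i ^ 2) / 2)"
  proof (rule sum_mono)
    fix i
    have "0 \<le> l^2 * lam i ^ 2 * (lam i - l)^2" by simp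
    then show "l^3 * lam i ^ 3 \<le> (l^2 * lam i ^ 4 + l^4 * lam i ^ 2) / 2"
      by (simp add: power2_eq_square power3_eq_cube power4_eq_xxxx algebra_simps)
  qed
  also have "\<dots> = (\<Sum>i<m. l^2 * lam i ^ 4 + l^4 * lam i ^ 2) / 2"
    by (simp add: sum_divide_distrib)
  also have "\<dots> = (l^2 * (\<Sum>i<m. lam i ^ 4) + l^4 * (\<Sum>i<m. lam i ^ 2)) / 2"
    by (simp add: sum.distrib sum_distrib_left)
  also have "\<dots> \<le> (l^2 * (\<Sum>i<m. lam i ^ 2)^2 + l^4 * (\<Sum>i<m. lam i ^ 2)) / 2"
    using sum4_le[OF assms] by (intro divide_right_mono add_right_mono mult_left_mono) auto
  finally show ?thesis .
qed

lemma key6: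
  fixes x y z P Q R W :: real
  assumes "x \<le> 60* P" "y \<le> (P + Q)/2" "z \<le> 6040* R" "0 \<le> P" "0 \<le> Q"
  shows "z + 30* x + 1280* y + 1800* Q + 6040* W \<le> 6040* R + 18120* P + 18120* Q + 6040* W"
proof -
  have "1280 * y \<le> 640 * P + 640 * Q" using assms(2) by simp
  moreover have "30 * x \<le> 1800 * P" using assms(1) by simp
  ultimately show ?thesis using assms(3-5) by simp
qed

lemma S_moments:
  assumes n: "n \<ge> 1" and pos: "\<forall>i<n. 0 \<le> lam i"
  shows "m \<le> n \<Longrightarrow> (\<forall>k\<le>6. integrable (gauss_space n) (\<lambda>G. Sm lam m G ^ k))
    \<and> integral\<^sup>L (gauss_space n) (\<lambda>G. Sm lam m G ^ 0) = 1
    \<and> integral\<^sup>L (gauss_space n) (\<lambda>G. Sm lam m G ^ 1) = 0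
    \<and> integral\<^sup>L (gauss_space n) (\<lambda>G. Sm lam m G ^ 2) = 2 * (\<Sum>i<m. lam i ^ 2)
    \<and> integral\<^sup>L (gauss_space n) (\<lambda>G. Sm lam m G ^ 3) = 8 * (\<Sum>i<m. lam i ^ 3)
    \<and> integral\<^sup>L (gauss_space n) (\<lambda>G. Sm lam m G ^ 4) \<le> 60 * (\<Sum>i<m. lam i ^ 2)^2
    \<and> integral\<^sup>L (gauss_space n) (\<lambda>G. Sm lam m G ^ 6) \<le> 6040 * (\<Sum>i<m. lam i ^ 2)^3"
proof (induction m)
  case 0
  interpret prob_space "gauss_space n" by (rule gs_prob)
  have z: "Sm lam 0 G = 0" for G by (simp add: Sm_def)
  show ?case by (simp add: z prob_space)
next
  case (Suc m)
  interpret prob_space "gauss_space n" by (rule gs_prob)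
  let ?M = "gauss_space n"
  have m: "m < n" using Suc.prems by simp
  have IH: "(\<forall>k\<le>6. integrable ?M (\<lambda>G. Sm lam m G ^ k))
    \<and> integral\<^sup>L ?M (\<lambda>G. Sm lam m G ^ 0) = 1
    \<and> integral\<^sup>L ?M (\<lambda>G. Sm lam m G ^ 1) = 0
    \<and> integral\<^sup>L ?M (\<lambda>G. Sm lam m G ^ 2) = 2 * (\<Sum>i<m. lam i ^ 2)
    \<and> integral\<^sup>L ?M (\<lambda>G. Sm lam m G ^ 3) = 8 * (\<Sum>i<m. lam i ^ 3)
    \<and> integral\<^sup>L ?M (\<lambda>G. Sm lam m G ^ 4) \<le> 60 * (\<Sum>i<m. lam i ^ 2)^2
    \<and> integral\<^sup>L ?M (\<lambda>G. Sm lam m G ^ 6) \<le> 6040 * (\<Sum>i<m. lam i ^ 2)^3"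
    using Suc.IH Suc.prems by simp
  define Y where "Y = (\<lambda>G::nat\<Rightarrow>real. lam m * ((G m)\<^sup>2 - 1))"
  define ey where "ey j = integral\<^sup>L ?M (\<lambda>G. Y G ^ j)" for j
  define es where "es j = integral\<^sup>L ?M (\<lambda>G. Sm lam m G ^ j)" for j
  define l where "l = lam m"
  define s2 where "s2 = (\<Sum>i<m. lam i ^ 2)"
  define s3 where "s3 = (\<Sum>i<m. lam i ^ 3)"
  have l0: "0 \<le> l" using pos m by (simp add: l_def)
  have s20: "0 \<le> s2" unfolding s2_def by (intro sum_nonneg) auto
  have pos_m: "\<forall>i<m. 0 \<le> lam i" using pos m by auto
  have iY: "integrable ?M (\<lambda>G. Y G ^ j)" for j
    using Y_mom[OF m sg_poly[of j], where lam=lam] unfolding Y_def by (simp add: has_bochner_integral_iff)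
  have hY: "ey k = l ^ k * c" if "has_bochner_integral std_gaussian (\<lambda>x. (x\<^sup>2 - 1) ^ k) c" for k c
    using Y_mom[OF m, where lam=lam and k=k and c=c] that unfolding ey_def Y_def l_def by (intro has_bochner_integral_integral_eq) simp
  have ey0: "ey 0 = 1" unfolding ey_def by (simp add: prob_space)
  have ey1: "ey 1 = 0" using hY[OF sg_m1] by simp
  have ey2: "ey 2 = 2 * l^2" using hY[OF sg_m2] by simp
  have ey3: "ey 3 = 8 * l^3" using hY[OF sg_m3] by simp
  have ey4: "ey 4 = 60 * l^4" using hY[OF sg_m4] by simp
  have ey6: "ey 6 = 6040 * l^6" using hY[OF sg_m6] by simp
  have es0: "es 0 = 1" and es1: "es 1 = 0" and es2: "es 2 = 2 * s2" and es3: "es 3 = 8 * s3"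
    and es4: "es 4 \<le> 60 * s2^2" and es6: "es 6 \<le> 6040 * s2^3"
    using IH unfolding es_def s2_def s3_def by auto
  have iS: "j \<le> 6 \<Longrightarrow> integrable ?M (\<lambda>G. Sm lam m G ^ j)" for j using IH by auto
  have ind: "indep_var borel Y borel (Sm lam m)" unfolding Y_def by (rule Y_indep[OF n m])
  have eqS: "Sm lam (Suc m) G = Y G + Sm lam m G" for G by (simp add: Sm_def Y_def)
  have MA: "integrable ?M (\<lambda>G. Sm lam (Suc m) G ^ k) \<and>
    integral\<^sup>L ?M (\<lambda>G. Sm lam (Suc m) G ^ k) = (\<Sum>j\<le>k. of_nat (k choose j) * (ey j * es (k - j)))"
    if "k \<le> 6" for k
    unfolding eqS ey_def es_def using that by (intro mom_add[OF ind iY iS]) auto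
  have sS2: "(\<Sum>i<Suc m. lam i ^ 2) = s2 + l^2" by (simp add: s2_def l_def)
  have sS3: "(\<Sum>i<Suc m. lam i ^ 3) = s3 + l^3" by (simp add: s3_def l_def)
  have E0: "integral\<^sup>L ?M (\<lambda>G. Sm lam (Suc m) G ^ 0) = 1" by (simp add: prob_space)
  have E1: "integral\<^sup>L ?M (\<lambda>G. Sm lam (Suc m) G ^ 1) = 0"
    using MA[of 1] ey1 es1 by (simp add: ey0 es0)
  have eyS: "ey (Suc 0) = 0" "ey (Suc (Suc 0)) = 2*l^2" "ey (Suc (Suc (Suc 0))) = 8*l^3"
    "ey (Suc (Suc (Suc (Suc 0)))) = 60*l^4" "ey (Suc (Suc (Suc (Suc (Suc (Suc 0)))))) = 6040*l^6"
    using ey1 ey2 ey3 ey4 ey6 by (simp_all add: eval_nat_numeral)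
  have esS: "es (Suc 0) = 0" "es (Suc (Suc 0)) = 2 * s2" "es (Suc (Suc (Suc 0))) = 8 * s3"
    using es1 es2 es3 by (simp_all add: eval_nat_numeral)
  have E2: "integral\<^sup>L ?M (\<lambda>G. Sm lam (Suc m) G ^ 2) = 2 * (s2 + l^2)"
    using MA[of 2] by (simp add: eval_nat_numeral sum.atMost_Suc ey0 es0 eyS esS)
  have E3: "integral\<^sup>L ?M (\<lambda>G. Sm lam (Suc m) G ^ 3) = 8 * (s3 + l^3)"
    using MA[of 3] by (simp add: eval_nat_numeral sum.atMost_Suc ey0 es0 eyS esS)
  have E4: "integral\<^sup>L ?M (\<lambda>G. Sm lam (Suc m) G ^ 4) = es 4 + 24*l^2 * s2 + 60*l^4"
    using MA[of 4] by (simp add: eval_nat_numeral sum.atMost_Suc ey0 es0 eyS esS)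
  have E6: "integral\<^sup>L ?M (\<lambda>G. Sm lam (Suc m) G ^ 6) = es 6 + 30*l^2*es 4 + 1280*l^3* s3 + 1800*l^4* s2 + 6040*l^6"
    using MA[of 6] by (simp add: eval_nat_numeral sum.atMost_Suc ey0 es0 eyS esS)
  have int: "\<forall>k\<le>6. integrable ?M (\<lambda>G. Sm lam (Suc m) G ^ k)" using MA by blast
  have p1: "0 \<le> l^2 * s2" and p2: "0 \<le> l^2 * s2^2" and p3: "0 \<le> l^4 * s2"
    using l0 s20 by simp_all
  have E4': "integral\<^sup>L ?M (\<lambda>G. Sm lam (Suc m) G ^ 4) \<le> 60 * (s2 + l^2)^2"
  proof -
    have "60 * (s2 + l^2)^2 = 60 * s2^2 + 120 * (l^2 * s2) + 60 * l^4"
      by (simp add: power2_eq_square power4_eq_xxxx algebra_simps)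
    moreover have "24*l^2* s2 = 24*(l^2* s2)" by simp
    ultimately show ?thesis using E4 es4 p1 by linarith
  qed
  have E6': "integral\<^sup>L ?M (\<lambda>G. Sm lam (Suc m) G ^ 6) \<le> 6040 * (s2 + l^2)^3"
  proof -
    have a: "l^2 * es 4 \<le> l^2 * (60 * s2^2)" using es4 by (intro mult_left_mono) auto
    have b: "l^3 * s3 \<le> (l^2 * s2^2 + l^4 * s2) / 2" unfolding s3_def s2_def by (rule s3_le[OF pos_m])
    have c: "6040 * (s2 + l^2)^3 = 6040 * s2^3 + 18120 * (l^2 * s2^2) + 18120 * (l^4 * s2) + 6040 * l^6"
      by (simp add: power2_eq_square power3_eq_cube power4_eq_xxxx eval_nat_numeral algebra_simps)
    have d: "integral\<^sup>L ?M (\<lambda>G. Sm lam (Suc m) G ^ 6) = es 6 + 30 * (l^2 * es 4) + 1280 * (l^3 * s3) + 1800 * (l^4 * s2) + 6040 * l^6"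
      using E6 by (simp add: algebra_simps)
    have a2: "l^2 * (60 * s2^2) = 60 * (l^2 * s2^2)" by simp
    have a3: "l^2 * es 4 \<le> 60 * (l^2 * s2^2)" using a a2 by linarith
    show ?thesis unfolding c d by (rule key6[OF a3 b es6 p2 p3])
  qed
  show ?case using int E0 E1 E2 E3 E4' E6' unfolding sS2 sS3 by simp
qed

lemma amgm_sq: fixes a u c :: real assumes "a > 0" shows "c * u \<le> a * u^2 + c^2 / (4 * a)"
proof -
  have "0 \<le> a * (u - c / (2 * a))^2" using assms by simp
  also have "a * (u - c / (2 * a))^2 = a * u^2 - c * u + c^2 / (4 * a)"
    using assms by (simp add: power2_eq_square field_simps)
  finally show ?thesis by simp
qed

lemma pw_up:
  fixes z f a :: real assumes f: "f > 0" and a: "a > 0"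
  shows "z^3 + 3 * f * z^2 - 4 * f^3 \<le> a * z^6 + (81 / (4 * a)) * (if z > f then 1 else 0)"
proof -
  have e: "z^3 + 3 * f * z^2 - 4 * f^3 = (z - f) * (z + 2 * f)^2" by (simp add: power2_eq_square power3_eq_cube algebra_simps)
  show ?thesis
  proof (cases "z > f")
    case True
    have "(z - f) * (z + 2 * f)^2 \<le> z * (3 * z)^2"
      using True f by (intro mult_mono power_mono) auto
    also have "\<dots> = 9 * z^3" by (simp add: power2_eq_square power3_eq_cube)
    also have "\<dots> \<le> a * (z^3)^2 + 9^2 / (4 * a)" by (rule amgm_sq[OF a])
    finally show ?thesis using True e by (simp add: power_mult[symmetric])
  next
    case False
    have "(z - f) * (z + 2 * f)^2 \<le> 0" using False by (intro mult_nonpos_nonneg) auto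
    then have "z^3 + 3 * f * z^2 - 4 * f^3 \<le> 0" by (simp only: e)
    moreover have "0 \<le> a * z^6" using a zero_le_power2[of "z^3"] by (simp add: power_mult[symmetric])
    ultimately show ?thesis using False e by simp
  qed
qed

lemma pw_low:
  fixes z f a :: real assumes f: "f > 0" and a: "a > 0"
  shows "6 * f * z^2 - 9 * f^2 * z - z^3 \<le> a * (z^6 + f^6) + (128 / a) * (if z < 0 then 1 else 0)"
proof -
  have e: "6 * f * z^2 - 9 * f^2 * z - z^3 = (- z) * (- z + 3 * f)^2" by (simp add: power2_eq_square power3_eq_cube algebra_simps)
  have z6: "0 \<le> z^6" using zero_le_power2[of "z^3"] by (simp add: power_mult[symmetric])
  have f6: "0 \<le> f^6" using f by simp
  show ?thesis
  proof (cases "z < 0")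
    case True
    define u where "u = - z"
    have u: "u > 0" using True by (simp add: u_def)
    have b1: "u * (u + 3 * f)^2 \<le> 16 * u^3 + 16 * f^3"
    proof (cases "u \<le> f")
      case True
      have "u * (u + 3 * f)^2 \<le> f * (4 * f)^2" using True u f by (intro mult_mono power_mono) auto
      also have "\<dots> = 16 * f^3" by (simp add: power2_eq_square power3_eq_cube)
      moreover have "0 \<le> u^3" using u by simp
      ultimately show ?thesis by linarith
    next
      case False
      have "u * (u + 3 * f)^2 \<le> u * (4 * u)^2" using False u f by (intro mult_mono power_mono) auto
      also have "\<dots> = 16 * u^3" by (simp add: power2_eq_square power3_eq_cube)
      moreover have "0 \<le> f^3" using f by simp
      ultimately show ?thesis by linarith
    qed
    have b2: "16 * u^3 \<le> a * (u^3)^2 + 16^2 / (4 * a)" by (rule amgm_sq[OF a])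
    have b3: "16 * f^3 \<le> a * (f^3)^2 + 16^2 / (4 * a)" by (rule amgm_sq[OF a])
    have "(u^3)^2 = z^6" by (simp add: u_def power_mult[symmetric])
    moreover have "(f^3)^2 = f^6" by (simp add: power_mult[symmetric])
    moreover have "(16::real)^2 / (4 * a) + 16^2 / (4 * a) = 128 / a" by simp
    ultimately show ?thesis using True e b1 b2 b3 unfolding u_def[symmetric] by (simp add: algebra_simps)
  next
    case False
    have "(- z) * (- z + 3 * f)^2 \<le> 0" using False by (intro mult_nonpos_nonneg) auto
    then have h: "6 * f * z^2 - 9 * f^2 * z - z^3 \<le> 0" by (simp only: e)
    have "0 \<le> a * (z^6 + f^6)" using a z6 f6 by simp
    then show ?thesis using False h by simp
  qed
qed

lemma (in prob_space) upper_tail: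
  fixes Z :: "'a \<Rightarrow> real" and f K :: real
  assumes Zm: "Z \<in> borel_measurable M"
    and int: "\<forall>k\<le>6. integrable M (\<lambda>\<omega>. Z \<omega> ^ k)"
    and f: "f > 0" and K: "K > 0"
    and m2: "integral\<^sup>L M (\<lambda>\<omega>. Z \<omega> ^ 2) = 2 * f^2"
    and m3: "integral\<^sup>L M (\<lambda>\<omega>. Z \<omega> ^ 3) \<ge> 0"
    and m6: "integral\<^sup>L M (\<lambda>\<omega>. Z \<omega> ^ 6) \<le> K * f^6"
  shows "prob {\<omega> \<in> space M. Z \<omega> > f} \<ge> 4 / (81 * K)"
proof -
  let ?A = "{\<omega> \<in> space M. Z \<omega> > f}"
  have A: "?A \<in> events" using Zm by measurable
  define a where "a = 1 / (K * f^3)"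
  have a0: "a > 0" using f K by (simp add: a_def)
  have i2: "integrable M (\<lambda>\<omega>. Z \<omega> ^ 2)" and i3: "integrable M (\<lambda>\<omega>. Z \<omega> ^ 3)"
    and i6: "integrable M (\<lambda>\<omega>. Z \<omega> ^ 6)" using int by auto
  have iA: "integrable M (indicator ?A :: 'a \<Rightarrow> real)"
    using A by (simp add: integrable_indicator_iff less_top[symmetric])
  have ig: "integrable M (\<lambda>\<omega>. Z \<omega>^3 + 3 * f * Z \<omega>^2 - 4 * f^3)"
    using i2 i3 by auto
  have Eg: "integral\<^sup>L M (\<lambda>\<omega>. Z \<omega>^3 + 3 * f * Z \<omega>^2 - 4 * f^3)
      = integral\<^sup>L M (\<lambda>\<omega>. Z \<omega>^3) + 3 * f * integral\<^sup>L M (\<lambda>\<omega>. Z \<omega>^2) - 4 * f^3"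
    using i2 i3 by (simp add: prob_space)
  have "integral\<^sup>L M (\<lambda>\<omega>. Z \<omega>^3 + 3 * f * Z \<omega>^2 - 4 * f^3)
      \<le> integral\<^sup>L M (\<lambda>\<omega>. a * Z \<omega>^6 + (81 / (4 * a)) * indicator ?A \<omega>)"
  proof (rule integral_mono[OF ig])
    show "integrable M (\<lambda>\<omega>. a * Z \<omega>^6 + (81 / (4 * a)) * indicator ?A \<omega>)"
      using i6 iA by auto
    fix \<omega> assume "\<omega> \<in> space M"
    then have "indicator ?A \<omega> = (if Z \<omega> > f then 1 else (0::real))" by (simp add: indicator_def)
    then show "Z \<omega>^3 + 3 * f * Z \<omega>^2 - 4 * f^3 \<le> a * Z \<omega>^6 + (81 / (4 * a)) * indicator ?A \<omega>"
      using pw_up[OF f a0, of "Z \<omega>"] by simp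
  qed
  also have "\<dots> = a * integral\<^sup>L M (\<lambda>\<omega>. Z \<omega>^6) + (81 / (4 * a)) * prob ?A"
    using i6 iA by (simp add: Int_absorb2)
  finally have h1: "integral\<^sup>L M (\<lambda>\<omega>. Z \<omega>^3) + 3 * f * integral\<^sup>L M (\<lambda>\<omega>. Z \<omega>^2) - 4 * f^3
      \<le> a * integral\<^sup>L M (\<lambda>\<omega>. Z \<omega>^6) + (81 / (4 * a)) * prob ?A"
    using Eg by simp
  have h2: "3 * f * integral\<^sup>L M (\<lambda>\<omega>. Z \<omega>^2) = 6 * f^3" using m2 by (simp add: eval_nat_numeral)
  have h3: "a * integral\<^sup>L M (\<lambda>\<omega>. Z \<omega>^6) \<le> a * (K * f^6)" using m6 a0 by simp
  have h4: "a * (K * f^6) = f^3" using f K by (simp add: a_def field_simps eval_nat_numeral)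
  have h5: "81 / (4 * a) = 81 * K * f^3 / 4" by (simp add: a_def)
  have "f^3 \<le> (81 / (4 * a)) * prob ?A" using h1 h2 h3 h4 m3 by linarith
  then have "f^3 * 4 \<le> f^3 * (81 * K * prob ?A)" unfolding h5 by (simp add: algebra_simps)
  then have "4 \<le> 81 * K * prob ?A" using f by (simp add: mult_le_cancel_left_pos)
  then show ?thesis using K by (simp add: field_simps)
qed

lemma (in prob_space) lower_tail:
  fixes Z :: "'a \<Rightarrow> real" and f K :: real
  assumes Zm: "Z \<in> borel_measurable M"
    and int: "\<forall>k\<le>6. integrable M (\<lambda>\<omega>. Z \<omega> ^ k)"
    and f: "f > 0" and K: "K > 0"
    and m1: "integral\<^sup>L M (\<lambda>\<omega>. Z \<omega> ^ 1) = 0"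
    and m2: "integral\<^sup>L M (\<lambda>\<omega>. Z \<omega> ^ 2) = 2 * f^2"
    and m3: "integral\<^sup>L M (\<lambda>\<omega>. Z \<omega> ^ 3) \<le> 8 * f^3"
    and m6: "integral\<^sup>L M (\<lambda>\<omega>. Z \<omega> ^ 6) \<le> K * f^6"
  shows "prob {\<omega> \<in> space M. Z \<omega> < 0} \<ge> 1 / (32 * (K + 1))"
proof -
  let ?A = "{\<omega> \<in> space M. Z \<omega> < 0}"
  have A: "?A \<in> events" using Zm by measurable
  define a where "a = 2 / ((K + 1) * f^3)"
  have a0: "a > 0" using f K by (simp add: a_def)
  have i2: "integrable M (\<lambda>\<omega>. Z \<omega> ^ 2)" and i3: "integrable M (\<lambda>\<omega>. Z \<omega> ^ 3)"
    and i6: "integrable M (\<lambda>\<omega>. Z \<omega> ^ 6)" using int by auto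
  have i1': "integrable M Z" using int[rule_format, of 1] by simp
  have m1': "integral\<^sup>L M Z = 0" using m1 by simp
  have iA: "integrable M (indicator ?A :: 'a \<Rightarrow> real)"
    using A by (simp add: integrable_indicator_iff less_top[symmetric])
  have ig: "integrable M (\<lambda>\<omega>. 6 * f * Z \<omega>^2 - 9 * f^2 * Z \<omega> - Z \<omega>^3)"
    using i1' i2 i3 by auto
  have Eg: "integral\<^sup>L M (\<lambda>\<omega>. 6 * f * Z \<omega>^2 - 9 * f^2 * Z \<omega> - Z \<omega>^3)
      = 6 * f * integral\<^sup>L M (\<lambda>\<omega>. Z \<omega>^2) - 9 * f^2 * integral\<^sup>L M Z - integral\<^sup>L M (\<lambda>\<omega>. Z \<omega>^3)"
    using i1' i2 i3 by simp
  have "integral\<^sup>L M (\<lambda>\<omega>. 6 * f * Z \<omega>^2 - 9 * f^2 * Z \<omega> - Z \<omega>^3)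
      \<le> integral\<^sup>L M (\<lambda>\<omega>. a * Z \<omega>^6 + a * f^6 + (128 / a) * indicator ?A \<omega>)"
  proof (rule integral_mono[OF ig])
    show "integrable M (\<lambda>\<omega>. a * Z \<omega>^6 + a * f^6 + (128 / a) * indicator ?A \<omega>)"
      using i6 iA by auto
    fix \<omega> assume "\<omega> \<in> space M"
    then have "indicator ?A \<omega> = (if Z \<omega> < 0 then 1 else (0::real))" by (simp add: indicator_def)
    then show "6 * f * Z \<omega>^2 - 9 * f^2 * Z \<omega> - Z \<omega>^3 \<le> a * Z \<omega>^6 + a * f^6 + (128 / a) * indicator ?A \<omega>"
      using pw_low[OF f a0, of "Z \<omega>"] by (simp add: distrib_left)
  qed
  also have "\<dots> = a * integral\<^sup>L M (\<lambda>\<omega>. Z \<omega>^6) + a * f^6 + (128 / a) * prob ?A"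
    using i6 iA by (simp add: Int_absorb2 prob_space)
  finally have h1: "6 * f * integral\<^sup>L M (\<lambda>\<omega>. Z \<omega>^2) - 9 * f^2 * integral\<^sup>L M Z - integral\<^sup>L M (\<lambda>\<omega>. Z \<omega>^3)
      \<le> a * integral\<^sup>L M (\<lambda>\<omega>. Z \<omega>^6) + a * f^6 + (128 / a) * prob ?A"
    using Eg by simp
  have h2: "6 * f * integral\<^sup>L M (\<lambda>\<omega>. Z \<omega>^2) = 12 * f^3" using m2 by (simp add: eval_nat_numeral)
  have h3: "a * integral\<^sup>L M (\<lambda>\<omega>. Z \<omega>^6) \<le> a * (K * f^6)" using m6 a0 by simp
  have h4: "a * (K * f^6) + a * f^6 = 2 * f^3"
  proof -
    have q: "a * ((K + 1) * f^3) = 2" using f K by (simp add: a_def)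
    have f6: "f^6 = f^3 * f^3" by (simp add: power_add[symmetric])
    have "a * (K * f^6) + a * f^6 = (a * ((K + 1) * f^3)) * f^3" unfolding f6 by (simp add: algebra_simps)
    then show ?thesis unfolding q by simp
  qed
  have h5: "128 / a = 64 * (K + 1) * f^3" using f K by (simp add: a_def field_simps)
  have "2 * f^3 \<le> (128 / a) * prob ?A" using h1 h2 h3 h4 m3 m1' by simp
  then have "f^3 * 2 \<le> f^3 * (64 * (K + 1) * prob ?A)" unfolding h5 by (simp add: algebra_simps)
  then have "2 \<le> 64 * (K + 1) * prob ?A" using f by (simp add: mult_le_cancel_left_pos)
  then show ?thesis using K by (simp add: field_simps)
qed

lemma main_bounds:
  fixes n :: nat and lam :: "nat \<Rightarrow> real"
  assumes n: "n \<ge> 1" and pos: "\<forall>i<n. 0 < lam i"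
  shows "measure (gauss_space n) {G \<in> space (gauss_space n). (\<Sum>i<n. lam i * (G i)\<^sup>2) > (\<Sum>i<n. lam i) + sqrt (\<Sum>i<n. (lam i)\<^sup>2)} > 1/250000
    \<and> measure (gauss_space n) {G \<in> space (gauss_space n). (\<Sum>i<n. lam i * (G i)\<^sup>2) < (\<Sum>i<n. lam i)} > 1/250000"
proof -
  interpret prob_space "gauss_space n" by (rule gs_prob)
  let ?M = "gauss_space n"
  define s2 where "s2 = (\<Sum>i<n. (lam i)\<^sup>2)"
  define f where "f = sqrt s2"
  have pos': "\<forall>i<n. 0 \<le> lam i" using pos by auto
  have "(lam 0)\<^sup>2 \<le> s2" unfolding s2_def using n by (intro member_le_sum) auto
  moreover have "0 < (lam 0)\<^sup>2" using pos n by auto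
  ultimately have s2p: "s2 > 0" by linarith
  have f0: "f > 0" using s2p by (simp add: f_def)
  have ff: "f^2 = s2" using s2p by (simp add: f_def)
  have f3: "f^3 = s2 * f" using ff by (simp add: power3_eq_cube power2_eq_square)
  have f6: "f^6 = s2^3"
  proof -
    have "f^6 = (f^2)^3" by (simp add: power_mult[symmetric])
    then show ?thesis using ff by simp
  qed
  note SM = S_moments[OF n pos' order_refl]
  have int: "\<forall>k\<le>6. integrable ?M (\<lambda>G. Sm lam n G ^ k)" using SM by blast
  have m1: "integral\<^sup>L ?M (\<lambda>G. Sm lam n G ^ 1) = 0" using SM by blast
  have m2: "integral\<^sup>L ?M (\<lambda>G. Sm lam n G ^ 2) = 2 * f^2" using SM ff s2_def by simp
  have m3: "integral\<^sup>L ?M (\<lambda>G. Sm lam n G ^ 3) = 8 * (\<Sum>i<n. lam i ^ 3)" using SM by blast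
  have m6: "integral\<^sup>L ?M (\<lambda>G. Sm lam n G ^ 6) \<le> 6040 * f^6" using SM f6 s2_def by simp
  have s3a: "0 \<le> (\<Sum>i<n. lam i ^ 3)" using pos' by (intro sum_nonneg) auto
  have s3b: "(\<Sum>i<n. lam i ^ 3) \<le> f^3"
  proof -
    have "(\<Sum>i<n. lam i ^ 3) \<le> (\<Sum>i<n. (lam i)\<^sup>2 * f)"
    proof (rule sum_mono)
      fix i assume i: "i \<in> {..<n}"
      have "(lam i)\<^sup>2 \<le> s2" unfolding s2_def using i by (intro member_le_sum) auto
      then have "sqrt ((lam i)\<^sup>2) \<le> f" unfolding f_def by (rule real_sqrt_le_mono)
      then have "lam i \<le> f" using pos' i by simp
      then have "(lam i)\<^sup>2 * lam i \<le> (lam i)\<^sup>2 * f" by (intro mult_left_mono) auto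
      then show "lam i ^ 3 \<le> (lam i)\<^sup>2 * f" by (simp add: power2_eq_square power3_eq_cube)
    qed
    also have "\<dots> = f^3" unfolding f3 s2_def by (simp add: sum_distrib_right)
    finally show ?thesis .
  qed
  have Zm: "Sm lam n \<in> borel_measurable ?M" unfolding Sm_def[abs_def] by measurable
  have up: "prob {G \<in> space ?M. Sm lam n G > f} \<ge> 4 / (81 * 6040)"
    by (rule upper_tail[OF Zm int f0 _ m2 _ m6]) (use m3 s3a in auto)
  have low: "prob {G \<in> space ?M. Sm lam n G < 0} \<ge> 1 / (32 * (6040 + 1))"
    by (rule lower_tail[OF Zm int f0 _ m1 m2 _ m6]) (use m3 s3b in auto)
  have eqZ: "Sm lam n G = (\<Sum>i<n. lam i * (G i)\<^sup>2) - (\<Sum>i<n. lam i)" for G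
    by (simp add: Sm_def right_diff_distrib sum_subtractf)
  have E1: "{G \<in> space ?M. (\<Sum>i<n. lam i * (G i)\<^sup>2) > (\<Sum>i<n. lam i) + sqrt (\<Sum>i<n. (lam i)\<^sup>2)}
      = {G \<in> space ?M. Sm lam n G > f}" unfolding eqZ f_def s2_def by auto
  have E2: "{G \<in> space ?M. (\<Sum>i<n. lam i * (G i)\<^sup>2) < (\<Sum>i<n. lam i)}
      = {G \<in> space ?M. Sm lam n G < 0}" unfolding eqZ by auto
  show ?thesis unfolding E1 E2 using up low by simp
qed

theorem proposition1:
  shows "\<exists>c::real. c > 0 \<and>
    (\<forall>(n::nat) (lam::nat \<Rightarrow> real).
       n \<ge> 1 \<longrightarrow> (\<forall>i<n. 0 < lam i \<and> lam i \<le> 1) \<longrightarrow>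
       (\<Sum>i<n. lam i) \<le> 1 \<longrightarrow>
       (let t = (\<Sum>i<n. lam i);
            f = sqrt (\<Sum>i<n. (lam i)\<^sup>2);
            X = (\<lambda>G. \<Sum>i<n. lam i * (G i)\<^sup>2);
            M = gauss_space n
        in measure M {G \<in> space M. X G > t + f} > c
         \<and> measure M {G \<in> space M. X G < t} > c))"
proof (intro exI[of _ "1/250000"] conjI allI impI)
  fix n :: nat and lam :: "nat \<Rightarrow> real"
  assume n: "n \<ge> 1" and l: "\<forall>i<n. 0 < lam i \<and> lam i \<le> 1"
  have pos: "\<forall>i<n. 0 < lam i" using l by auto
  show "let t = (\<Sum>i<n. lam i);
            f = sqrt (\<Sum>i<n. (lam i)\<^sup>2);
            X = (\<lambda>G. \<Sum>i<n. lam i * (G i)\<^sup>2);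
            M = gauss_space n
        in measure M {G \<in> space M. X G > t + f} > 1/250000
         \<and> measure M {G \<in> space M. X G < t} > 1/250000"
    unfolding Let_def using main_bounds[OF n pos] by simp
qed simp
end
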